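(* Let $\Gamma_n=\{P_1,\ldots,P_k\}$ with $k\ge3$, let $Q$ be a witness of $\Gamma_n$, and let $v_0,v_1,\ldots,v_r$ be a special path in $G_n(Q)$ of minimal length among all special paths in $G_n(Q)$; after reindexing, $v_0\cong P_1$, $v_1,\ldots,v_{r-1}\cong P_2$, $v_r\cong P_3$. Write $A=v_0$, $C=v_r$ (the anchor copies). Suppose the path contains at least two copies of $P_2$ (i.e. $r\ge 3$). Then (1) $\bigcup_{j=0}^r v_j=A\cup C$, and (2) the number of copies of $P_2$ on the path, $r-1$, equals $|A\setminus(A\cap C)|-1=|C\setminus(A\cap C)|-1$.
   Context: $\Gamma_n$ is a set of $k$ pairwise non-isomorphic posets of size $n$; $Q$ is a witness if the set of isomorphism classes of downsets of $Q$ of size $n$ is exactly $\Gamma_n$. The exchange graph $G_n(Q)$ has as vertices all downsets of $Q$ of size $n$ (as subsets), with an edge between two such downsets when they differ by exactly one element. A special path is a path $v_0,v_1,\ldots,v_r$ in $G_n(Q)$ with $r\ge 2$ such that for some three distinct indices $a,b,c$, $v_0\cong P_a$, $v_1,\ldots,v_{r-1}\cong P_b$, and $v_r\cong P_c$. *)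

theory Defs
  imports Main
begin

definition downset :: "'a set \<Rightarrow> 'a rel \<Rightarrow> 'a set \<Rightarrow> bool" where
  "downset S R D \<longleftrightarrow> D \<subseteq> S \<and> (\<forall>x\<in>D. \<forall>y. (y, x) \<in> R \<longrightarrow> y \<in> D)"

definition poset_iso :: "'a set \<Rightarrow> 'a rel \<Rightarrow> 'b set \<Rightarrow> 'b rel \<Rightarrow> bool" where
  "poset_iso D R P Rp \<longleftrightarrow> (\<exists>f. bij_betw f D P \<and>
      (\<forall>x\<in>D. \<forall>y\<in>D. (x, y) \<in> R \<longleftrightarrow> (f x, f y) \<in> Rp))"

definition Gamma :: "nat \<Rightarrow> nat \<Rightarrow> (nat \<Rightarrow> 'b set) \<Rightarrow> (nat \<Rightarrow> 'b rel) \<Rightarrow> bool" where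
  "Gamma n k Pc Pr \<longleftrightarrow>
     (\<forall>i\<in>{1..k}. partial_order_on (Pc i) (Pr i) \<and> finite (Pc i) \<and> card (Pc i) = n) \<and>
     (\<forall>i\<in>{1..k}. \<forall>j\<in>{1..k}. i \<noteq> j \<longrightarrow> \<not> poset_iso (Pc i) (Pr i) (Pc j) (Pr j))"

definition witness :: "'a set \<Rightarrow> 'a rel \<Rightarrow> nat \<Rightarrow> nat \<Rightarrow> (nat \<Rightarrow> 'b set) \<Rightarrow> (nat \<Rightarrow> 'b rel) \<Rightarrow> bool" where
  "witness S R n k Pc Pr \<longleftrightarrow>
     finite S \<and> partial_order_on S R \<and>
     (\<forall>D. downset S R D \<and> card D = n \<longrightarrow> (\<exists>i\<in>{1..k}. poset_iso D R (Pc i) (Pr i))) \<and>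
     (\<forall>i\<in>{1..k}. \<exists>D. downset S R D \<and> card D = n \<and> poset_iso D R (Pc i) (Pr i))"

definition exch_vertex :: "'a set \<Rightarrow> 'a rel \<Rightarrow> nat \<Rightarrow> 'a set \<Rightarrow> bool" where
  "exch_vertex S R n D \<longleftrightarrow> downset S R D \<and> finite D \<and> card D = n"

definition exch_edge :: "'a set \<Rightarrow> 'a set \<Rightarrow> bool" where
  "exch_edge D D' \<longleftrightarrow> card (D - D') = 1 \<and> card (D' - D) = 1"

definition exch_path :: "'a set \<Rightarrow> 'a rel \<Rightarrow> nat \<Rightarrow> (nat \<Rightarrow> 'a set) \<Rightarrow> nat \<Rightarrow> bool" where
  "exch_path S R n v r \<longleftrightarrow>
     (\<forall>j\<le>r. exch_vertex S R n (v j)) \<and> inj_on v {0..r} \<and>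
     (\<forall>j<r. exch_edge (v j) (v (Suc j)))"

definition special_path_idx ::
  "'a set \<Rightarrow> 'a rel \<Rightarrow> nat \<Rightarrow> nat \<Rightarrow> (nat \<Rightarrow> 'b set) \<Rightarrow> (nat \<Rightarrow> 'b rel)
    \<Rightarrow> (nat \<Rightarrow> 'a set) \<Rightarrow> nat \<Rightarrow> nat \<Rightarrow> nat \<Rightarrow> nat \<Rightarrow> bool" where
  "special_path_idx S R n k Pc Pr v r a b c \<longleftrightarrow>
     exch_path S R n v r \<and> r \<ge> 2 \<and>
     a \<in> {1..k} \<and> b \<in> {1..k} \<and> c \<in> {1..k} \<and> a \<noteq> b \<and> a \<noteq> c \<and> b \<noteq> c \<and>
     poset_iso (v 0) R (Pc a) (Pr a) \<and>
     (\<forall>j\<in>{1..r-1}. poset_iso (v j) R (Pc b) (Pr b)) \<and>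
     poset_iso (v r) R (Pc c) (Pr c)"

definition special_path ::
  "'a set \<Rightarrow> 'a rel \<Rightarrow> nat \<Rightarrow> nat \<Rightarrow> (nat \<Rightarrow> 'b set) \<Rightarrow> (nat \<Rightarrow> 'b rel)
    \<Rightarrow> (nat \<Rightarrow> 'a set) \<Rightarrow> nat \<Rightarrow> bool" where
  "special_path S R n k Pc Pr v r \<longleftrightarrow> (\<exists>a b c. special_path_idx S R n k Pc Pr v r a b c)"

end

theory Submission
  imports Defs
begin



lemma min_exists:
  assumes "finite X" "X \<noteq> {}" "trans R" "antisym R"
  shows "\<exists>m\<in>X. \<forall>y\<in>X. (y, m) \<in> R \<longrightarrow> y = m"
  using assms
proof (induction X rule: finite_induct)
  case empty then show ?case by simp
next
  case (insert x F)
  show ?case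
  proof (cases "F = {}")
    case True then show ?thesis by simp
  next
    case False
    then obtain m where m: "m \<in> F" "\<forall>y\<in>F. (y, m) \<in> R \<longrightarrow> y = m" using insert by blast
    show ?thesis
    proof (cases "(x, m) \<in> R")
      case True
      have "\<forall>y\<in>insert x F. (y, x) \<in> R \<longrightarrow> y = x"
      proof (intro ballI impI)
        fix y assume y: "y \<in> insert x F" "(y, x) \<in> R"
        show "y = x"
        proof (rule ccontr)
          assume "y \<noteq> x"
          then have "y \<in> F" using y by auto
          moreover have "(y, m) \<in> R" using True y(2) insert.prems(2) by (meson transD)
          ultimately have "y = m" using m by blast
          then show False using True y(2) `y \<noteq> x` insert.prems(3) by (metis antisymD)
        qed
      qed
      then show ?thesis by blast
    next
      case False
      then show ?thesis using m by blast
    qed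
  qed
qed

lemma edge_sym: "exch_edge D D' \<Longrightarrow> exch_edge D' D"
  unfolding exch_edge_def by simp

lemma card_diff_sym:
  assumes "finite A" "finite C" "card A = card C"
  shows "card (C - A) = card (A - C)"
  using assms by (simp add: card_Diff_subset_Int Int_commute)

lemma edge_card:
  assumes "exch_edge D D'" "finite D" "finite D'"
  shows "card (D - C) \<le> card (D' - C) + 1"
    and "(\<exists>y\<in>D' - D. y \<notin> C) \<Longrightarrow> card (D - C) \<le> card (D' - C)"
proof -
  obtain x where x: "D - D' = {x}" using assms(1) unfolding exch_edge_def by (meson card_1_singletonE)
  have sub: "D - C \<subseteq> (D' - C) \<union> {x}" using x by blast
  have "card (D - C) \<le> card ((D' - C) \<union> {x})" using sub assms by (intro card_mono) auto
  also have "\<dots> \<le> card (D' - C) + 1" using card_Un_le[of "D' - C" "{x}"] by simp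
  finally show "card (D - C) \<le> card (D' - C) + 1" .
  assume "\<exists>y\<in>D' - D. y \<notin> C"
  then obtain y where y: "y \<in> D'" "y \<notin> D" "y \<notin> C" by blast
  have "D - C \<subseteq> ((D' - C) - {y}) \<union> {x}" using x y by blast
  then have "card (D - C) \<le> card (((D' - C) - {y}) \<union> {x})" using assms by (intro card_mono) auto
  also have "\<dots> \<le> card ((D' - C) - {y}) + 1" using card_Un_le[of "(D' - C) - {y}" "{x}"] by simp
  also have "\<dots> = card (D' - C)" using y assms(3) card_Suc_Diff1[of "D' - C" y] by simp
  finally show "card (D - C) \<le> card (D' - C)" .
qed




lemma iso_trans_inv:
  assumes "poset_iso D R P1 R1" "poset_iso D R P2 R2"
  shows "poset_iso P1 R1 P2 R2"
proof -
  obtain f where f: "bij_betw f D P1" "\<forall>x\<in>D. \<forall>y\<in>D. (x, y) \<in> R \<longleftrightarrow> (f x, f y) \<in> R1"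
    using assms(1) unfolding poset_iso_def by blast
  obtain g where g: "bij_betw g D P2" "\<forall>x\<in>D. \<forall>y\<in>D. (x, y) \<in> R \<longleftrightarrow> (g x, g y) \<in> R2"
    using assms(2) unfolding poset_iso_def by blast
  define h where "h = g \<circ> inv_into D f"
  have hb: "bij_betw h P1 P2" unfolding h_def using f(1) g(1) bij_betw_inv_into bij_betw_trans by blast
  have "\<forall>p\<in>P1. \<forall>q\<in>P1. (p, q) \<in> R1 \<longleftrightarrow> (h p, h q) \<in> R2"
  proof (intro ballI)
    fix p q assume p: "p \<in> P1" and q: "q \<in> P1"
    have ip: "inv_into D f p \<in> D" "f (inv_into D f p) = p"
      using p f(1) by (auto simp: bij_betw_def inv_into_into f_inv_into_f)
    have iq: "inv_into D f q \<in> D" "f (inv_into D f q) = q"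
      using q f(1) by (auto simp: bij_betw_def inv_into_into f_inv_into_f)
    show "(p, q) \<in> R1 \<longleftrightarrow> (h p, h q) \<in> R2"
      using f(2) g(2) ip iq unfolding h_def by (metis comp_apply)
  qed
  then show ?thesis unfolding poset_iso_def using hb by blast
qed

locale ctx =
  fixes S :: "'a set" and R :: "'a rel" and n k :: nat
    and Pc :: "nat \<Rightarrow> 'b set" and Pr :: "nat \<Rightarrow> 'b rel"
  assumes G: "Gamma n k Pc Pr" and W: "witness S R n k Pc Pr"
begin

definition cls :: "'a set \<Rightarrow> nat" where
  "cls D = (SOME i. i \<in> {1..k} \<and> poset_iso D R (Pc i) (Pr i))"

definition walk :: "(nat \<Rightarrow> 'a set) \<Rightarrow> nat \<Rightarrow> bool" where
  "walk w m \<longleftrightarrow> (\<forall>j\<le>m. exch_vertex S R n (w j)) \<and> (\<forall>j<m. exch_edge (w j) (w (Suc j)))"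

lemma cls_in:
  assumes "exch_vertex S R n D"
  shows "cls D \<in> {1..k} \<and> poset_iso D R (Pc (cls D)) (Pr (cls D))"
proof -
  have "\<exists>i. i \<in> {1..k} \<and> poset_iso D R (Pc i) (Pr i)"
    using W assms unfolding witness_def exch_vertex_def by blast
  then show ?thesis unfolding cls_def by (rule someI_ex)
qed

lemma cls_eq:
  assumes "exch_vertex S R n D" "i \<in> {1..k}" "poset_iso D R (Pc i) (Pr i)"
  shows "cls D = i"
proof (rule ccontr)
  assume ne: "cls D \<noteq> i"
  have "poset_iso (Pc (cls D)) (Pr (cls D)) (Pc i) (Pr i)"
    using iso_trans_inv cls_in[OF assms(1)] assms(3) by blast
  then show False using G ne cls_in[OF assms(1)] assms(2) unfolding Gamma_def by blast
qed

lemma walk_shift: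
  assumes "walk w m" "s + L \<le> m"
  shows "walk (\<lambda>t. w (s + t)) L"
  using assms unfolding walk_def by auto

lemma walk_vertex: "walk w m \<Longrightarrow> j \<le> m \<Longrightarrow> exch_vertex S R n (w j)"
  unfolding walk_def by auto

lemma walk_edge: "walk w m \<Longrightarrow> j < m \<Longrightarrow> exch_edge (w j) (w (Suc j))"
  unfolding walk_def by auto

end


context ctx begin

lemma seg_special:
  "walk u L \<Longrightarrow> 2 \<le> L \<Longrightarrow> cls (u 0) \<noteq> cls (u L) \<Longrightarrow> (\<forall>t. 1 \<le> t \<and> t < L \<longrightarrow> cls (u t) = b)
   \<Longrightarrow> b \<noteq> cls (u 0) \<Longrightarrow> b \<noteq> cls (u L) \<Longrightarrow> \<exists>v' r'. special_path S R n k Pc Pr v' r' \<and> r' \<le> L"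
proof (induction L arbitrary: u rule: less_induct)
  case (less L)
  show ?case
  proof (cases "inj_on u {0..L}")
    case True
    have vx: "\<And>j. j \<le> L \<Longrightarrow> exch_vertex S R n (u j)" using less.prems(1) walk_vertex by blast
    have b1: "cls (u 1) = b" using less.prems(2,4) by auto
    have "special_path_idx S R n k Pc Pr u L (cls (u 0)) b (cls (u L))"
      unfolding special_path_idx_def
    proof (intro conjI)
      show "exch_path S R n u L" unfolding exch_path_def using True less.prems(1) unfolding walk_def by blast
      show "2 \<le> L" by fact
      show "cls (u 0) \<in> {1..k}" using cls_in vx by blast
      show "cls (u L) \<in> {1..k}" using cls_in vx by blast
      show "b \<in> {1..k}" using cls_in[OF vx[of 1]] b1 less.prems(2) by simp
      show "cls (u 0) \<noteq> b" using less.prems by simp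
      show "cls (u 0) \<noteq> cls (u L)" by fact
      show "b \<noteq> cls (u L)" by fact
      show "poset_iso (u 0) R (Pc (cls (u 0))) (Pr (cls (u 0)))" using cls_in vx by blast
      show "poset_iso (u L) R (Pc (cls (u L))) (Pr (cls (u L)))" using cls_in vx by blast
      show "\<forall>j\<in>{1..L - 1}. poset_iso (u j) R (Pc b) (Pr b)"
      proof
        fix j assume j: "j \<in> {1..L - 1}"
        then have "cls (u j) = b" using less.prems(2,4) by auto
        then show "poset_iso (u j) R (Pc b) (Pr b)" using cls_in[OF vx[of j]] j by auto
      qed
    qed
    then show ?thesis unfolding special_path_def by blast
  next
    case False
    then obtain x y where xy: "x \<in> {0..L}" "y \<in> {0..L}" "u x = u y" "x \<noteq> y"
      unfolding inj_on_def by blast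
    define p where "p = min x y"
    define q where "q = max x y"
    have pq: "p \<le> L" "q \<le> L" "p < q" "u p = u q"
      using xy unfolding p_def q_def by (auto simp: min_def max_def)
    have p1: "1 \<le> p"
    proof (rule ccontr)
      assume "\<not> 1 \<le> p"
      then have p0: "p = 0" by simp
      then have cq: "cls (u q) = cls (u 0)" using pq(4) by simp
      show False
      proof (cases "q = L")
        case True then show False using cq less.prems(3) by simp
      next
        case False
        then have "cls (u q) = b" using less.prems(4) pq p0 by simp
        then show False using cq less.prems(5) by simp
      qed
    qed
    have qL: "q < L"
    proof (rule ccontr)
      assume "\<not> q < L"
      then have "q = L" using pq by simp
      then show False using pq p1 less.prems(4,6) by auto
    qed
    define L' where "L' = L - (q - p)"
    define u' where "u' = (\<lambda>t. if t \<le> p then u t else u (t + (q - p)))"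
    have L'L: "L' < L" unfolding L'_def using pq by simp
    have L'p: "p < L'" unfolding L'_def using pq qL by simp
    have u'0: "u' 0 = u 0" unfolding u'_def by simp
    have u'L: "u' L' = u L" unfolding u'_def L'_def using pq qL by auto
    have w: "walk u' L'"
      unfolding walk_def
    proof (intro conjI allI impI)
      fix j assume "j \<le> L'"
      then show "exch_vertex S R n (u' j)" unfolding u'_def L'_def
        using walk_vertex[OF less.prems(1)] pq by auto
    next
      fix j assume j: "j < L'"
      show "exch_edge (u' j) (u' (Suc j))"
      proof (cases "j < p")
        case True then show ?thesis unfolding u'_def using walk_edge[OF less.prems(1), of j] pq by auto
      next
        case False
        then have "Suc j + (q - p) = Suc (j + (q - p))" "j + (q - p) < L" using j pq unfolding L'_def by auto
        moreover have "u' j = u (j + (q - p))" using False pq unfolding u'_def by auto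
        moreover have "u' (Suc j) = u (Suc j + (q - p))" using False unfolding u'_def by auto
        ultimately show ?thesis using walk_edge[OF less.prems(1)] by metis
      qed
    qed
    have cl: "\<forall>t. 1 \<le> t \<and> t < L' \<longrightarrow> cls (u' t) = b"
    proof (intro allI impI)
      fix t assume t: "1 \<le> t \<and> t < L'"
      show "cls (u' t) = b"
      proof (cases "t \<le> p")
        case True then show ?thesis unfolding u'_def using t pq less.prems(4) by auto
      next
        case False
        then have "1 \<le> t + (q - p)" "t + (q - p) < L" using t pq unfolding L'_def by auto
        then have "cls (u (t + (q - p))) = b" using less.prems(4) by blast
        then show ?thesis unfolding u'_def using False by simp
      qed
    qed
    have "\<exists>v' r'. special_path S R n k Pc Pr v' r' \<and> r' \<le> L'"
      using less.IH[OF L'L w] L'p p1 cl u'0 u'L less.prems(3,5,6) by simp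
    then show ?thesis using L'L by (meson less_imp_le_nat order_trans)
  qed
qed

end


context ctx begin

lemma third:
  "walk w m \<Longrightarrow> cls (w 0) \<noteq> cls (w m) \<Longrightarrow> p \<le> m \<Longrightarrow> cls (w p) \<noteq> cls (w 0) \<Longrightarrow> cls (w p) \<noteq> cls (w m)
   \<Longrightarrow> \<exists>v' r'. special_path S R n k Pc Pr v' r' \<and> r' \<le> m"
proof (induction m arbitrary: w p rule: less_induct)
  case (less m)
  define b where "b = cls (w p)"
  have p0: "0 < p" using less.prems(4) by (cases p) auto
  have pm: "p < m" using less.prems(3,5) le_neq_implies_less by blast
  define I where "I = {t. t < p \<and> cls (w t) \<noteq> b}"
  have I0: "0 \<in> I" unfolding I_def b_def using p0 less.prems(4) by simp
  have If: "finite I" unfolding I_def by simp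
  define i where "i = Max I"
  have iI: "i \<in> I" unfolding i_def using I0 If Max_in by blast
  have ip: "i < p" "cls (w i) \<noteq> b" using iI unfolding I_def by auto
  have ib: "\<And>t. i < t \<Longrightarrow> t < p \<Longrightarrow> cls (w t) = b"
  proof (rule ccontr)
    fix t assume "i < t" "t < p" "cls (w t) \<noteq> b"
    then have "t \<in> I" unfolding I_def by simp
    then have "t \<le> i" unfolding i_def using If Max_ge by blast
    then show False using `i < t` by simp
  qed
  define J where "J = {t. p < t \<and> t \<le> m \<and> cls (w t) \<noteq> b}"
  have Jm: "m \<in> J" unfolding J_def b_def using pm less.prems(5) by simp
  have Jf: "finite J" unfolding J_def by simp
  define j where "j = Min J"
  have jJ: "j \<in> J" unfolding j_def using Jm Jf Min_in by blast
  have jp: "p < j" "j \<le> m" "cls (w j) \<noteq> b" using jJ unfolding J_def by auto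
  have jb: "\<And>t. p < t \<Longrightarrow> t < j \<Longrightarrow> cls (w t) = b"
  proof (rule ccontr)
    fix t assume "p < t" "t < j" "cls (w t) \<noteq> b"
    then have "t \<in> J" unfolding J_def using jp by simp
    then have "j \<le> t" unfolding j_def using Jf Min_le by blast
    then show False using `t < j` by simp
  qed
  have inner: "cls (w t) = b" if "i < t" "t < j" for t
  proof -
    consider "t < p" | "t = p" | "p < t" by fastforce
    then show ?thesis using ib jb b_def that by cases auto
  qed
  show ?case
  proof (cases "cls (w i) = cls (w j)")
    case False
    define u where "u = (\<lambda>t. w (i + t))"
    have wu: "walk u (j - i)" unfolding u_def using walk_shift[OF less.prems(1), of i "j - i"] jp ip by simp
    have "\<exists>v' r'. special_path S R n k Pc Pr v' r' \<and> r' \<le> j - i"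
    proof (rule seg_special[OF wu, of b])
      show "2 \<le> j - i" using ip jp by simp
      show "cls (u 0) \<noteq> cls (u (j - i))" unfolding u_def using False ip jp by simp
      show "\<forall>t. 1 \<le> t \<and> t < j - i \<longrightarrow> cls (u t) = b" unfolding u_def
      proof (intro allI impI)
        fix t assume t: "1 \<le> t \<and> t < j - i"
        then have "i < i + t" "i + t < j" by auto
        then show "cls (w (i + t)) = b" using inner by blast
      qed
      show "b \<noteq> cls (u 0)" unfolding u_def using ip by simp
      show "b \<noteq> cls (u (j - i))" unfolding u_def using jp ip by simp
    qed
    then show ?thesis using jp by (meson diff_le_self order_trans)
  next
    case True
    show ?thesis
    proof (cases "cls (w i) = cls (w 0)")
      case False
      then have i0: "0 < i" by (cases i) auto
      define u where "u = (\<lambda>t. w (0 + t))"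
      have wu: "walk u (Suc i)" unfolding u_def using walk_shift[OF less.prems(1), of 0 "Suc i"] ip pm by simp
      have bi: "cls (w (Suc i)) = b" using inner[of "Suc i"] ip jp by simp
      have "\<exists>v' r'. special_path S R n k Pc Pr v' r' \<and> r' \<le> Suc i"
      proof (rule less.IH[OF _ wu, of i])
        show "Suc i < m" using ip pm by simp
        show "cls (u 0) \<noteq> cls (u (Suc i))" unfolding u_def using bi less.prems(4) b_def by simp
        show "i \<le> Suc i" by simp
        show "cls (u i) \<noteq> cls (u 0)" unfolding u_def using False by simp
        show "cls (u i) \<noteq> cls (u (Suc i))" unfolding u_def using bi ip by simp
      qed
      then show ?thesis using ip pm by (meson Suc_leI less_imp_le_nat order_trans)
    next
      case z0: True
      then have zm: "cls (w j) \<noteq> cls (w m)" using True less.prems(2) by simp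
      then have jm: "j < m" using jp by (metis le_neq_implies_less)
      define u where "u = (\<lambda>t. w ((j - 1) + t))"
      define L where "L = m - j + 1"
      have wu: "walk u L" unfolding u_def L_def using walk_shift[OF less.prems(1), of "j - 1" "m - j + 1"] jp jm ip by simp
      have bj: "cls (w (j - 1)) = b" using inner[of "j - 1"] ip jp by simp
      have uL: "u L = w m" unfolding u_def L_def using jp ip by simp
      have u1: "u 1 = w j" unfolding u_def using jp ip by simp
      have "\<exists>v' r'. special_path S R n k Pc Pr v' r' \<and> r' \<le> L"
      proof (rule less.IH[OF _ wu, of 1])
        show "L < m" unfolding L_def using ip jp by simp
        show "cls (u 0) \<noteq> cls (u L)" unfolding uL using bj b_def less.prems(5) unfolding u_def by simp
        show "1 \<le> L" unfolding L_def by simp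
        show "cls (u 1) \<noteq> cls (u 0)" unfolding u1 using bj jp unfolding u_def by simp
        show "cls (u 1) \<noteq> cls (u L)" unfolding u1 uL using zm by simp
      qed
      moreover have "L \<le> m" unfolding L_def using ip jp by simp
      ultimately show ?thesis using order_trans by blast
    qed
  qed
qed

end


context ctx begin

lemma RPO: "trans R" "antisym R"
  using W unfolding witness_def by (auto dest: partial_order_onD)

lemma geodesic:
  "exch_vertex S R n A \<Longrightarrow> exch_vertex S R n C \<Longrightarrow> card (A - C) = d \<Longrightarrow> \<exists>g. walk g d \<and> g 0 = A \<and> g d = C"
proof (induction d arbitrary: A)
  case 0
  have fA: "finite A" "finite C" "card A = card C" using 0 unfolding exch_vertex_def by auto
  then have "A - C = {}" using 0 by simp
  then have "A \<subseteq> C" by blast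
  then have "A = C" using fA card_subset_eq by blast
  then show ?case using 0 by (intro exI[of _ "\<lambda>_. A"]) (simp add: walk_def)
next
  case (Suc d)
  have fA: "finite A" "finite C" "card A = n" "card C = n" using Suc.prems unfolding exch_vertex_def by auto
  have dA: "downset S R A" "downset S R C" using Suc.prems unfolding exch_vertex_def by auto
  have "card (C - A) = Suc d" using card_diff_sym[of A C] fA Suc.prems(3) by simp
  then have CA: "C - A \<noteq> {}" by (metis card.empty nat.distinct(1))
  have AC: "A - C \<noteq> {}" using Suc.prems(3) by (metis card.empty nat.distinct(1))
  obtain c where c: "c \<in> C - A" "\<forall>y\<in>C - A. (y, c) \<in> R \<longrightarrow> y = c"
    using min_exists[of "C - A" R] CA fA RPO by blast
  have tc: "trans (R\<inverse>)" using RPO(1) unfolding trans_def by blast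
  have ac: "antisym (R\<inverse>)" using RPO(2) unfolding antisym_def by blast
  obtain x where x: "x \<in> A - C" "\<forall>y\<in>A - C. (y, x) \<in> R\<inverse> \<longrightarrow> y = x"
    using min_exists[of "A - C" "R\<inverse>"] AC fA tc ac by blast
  have xc: "x \<noteq> c" using x c by blast
  define A' where "A' = insert c (A - {x})"
  have dA': "downset S R A'"
    unfolding downset_def
  proof (intro conjI ballI allI impI)
    show "A' \<subseteq> S" using dA c x unfolding A'_def downset_def by blast
  next
    fix z y assume z: "z \<in> A'" and yz: "(y, z) \<in> R"
    show "y \<in> A'"
    proof (cases "z = c")
      case True
      then have yC: "y \<in> C" using dA(2) c yz unfolding downset_def by blast
      show ?thesis
      proof (cases "y \<in> A")
        case True then show ?thesis using yC x unfolding A'_def by blast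
      next
        case False then have "y = c" using c yC yz `z = c` by blast
        then show ?thesis unfolding A'_def by simp
      qed
    next
      case False
      then have zA: "z \<in> A" "z \<noteq> x" using z unfolding A'_def by auto
      then have yA: "y \<in> A" using dA(1) yz unfolding downset_def by blast
      have "y \<noteq> x"
      proof
        assume yx: "y = x"
        show False
        proof (cases "z \<in> C")
          case True then have "x \<in> C" using dA(2) yz yx unfolding downset_def by blast
          then show False using x by blast
        next
          case False then have "z = x" using x zA yz yx by blast
          then show False using zA by simp
        qed
      qed
      then show ?thesis using yA unfolding A'_def by blast
    qed
  qed
  have cA: "c \<notin> A" using c by blast
  have xA: "x \<in> A" using x by blast
  have fA': "finite A'" unfolding A'_def using fA by simp
  have cardA': "card A' = n" unfolding A'_def using fA cA xA
    by (simp add: card_Diff_singleton) (metis card_0_eq empty_iff Suc_pred neq0_conv)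
  have vA': "exch_vertex S R n A'" unfolding exch_vertex_def using dA' fA' cardA' by simp
  have "A' - C = (A - C) - {x}" unfolding A'_def using c by blast
  then have "card (A' - C) = d" using Suc.prems(3) x fA by (simp add: card_Diff_singleton)
  then obtain g' where g': "walk g' d" "g' 0 = A'" "g' d = C" using Suc.IH[OF vA' Suc.prems(2)] by blast
  have e: "exch_edge A A'"
  proof -
    have "A - A' = {x}" unfolding A'_def using xc xA by blast
    moreover have "A' - A = {c}" unfolding A'_def using cA by blast
    ultimately show ?thesis unfolding exch_edge_def by simp
  qed
  define g where "g = (\<lambda>t. if t = 0 then A else g' (t - 1))"
  have "walk g (Suc d)" unfolding walk_def
  proof (intro conjI allI impI)
    fix j assume "j \<le> Suc d"
    then show "exch_vertex S R n (g j)" unfolding g_def using Suc.prems(1) walk_vertex[OF g'(1)] by auto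
  next
    fix j assume j: "j < Suc d"
    show "exch_edge (g j) (g (Suc j))"
    proof (cases j)
      case 0 then show ?thesis unfolding g_def using e g'(2) by simp
    next
      case (Suc j') then show ?thesis unfolding g_def using walk_edge[OF g'(1), of j'] j by simp
    qed
  qed
  then show ?case using g'(3) unfolding g_def by auto
qed

end


context ctx begin

lemma pot:
  assumes "walk w m" "i \<le> j" "j \<le> m"
  shows "card (w i - C) \<le> (j - i) + card (w j - C)"
  using assms(2,3)
proof (induction j)
  case 0 then show ?case by simp
next
  case (Suc j)
  show ?case
  proof (cases "i = Suc j")
    case True then show ?thesis by simp
  next
    case False
    then have ij: "i \<le> j" using Suc.prems by simp
    have IH: "card (w i - C) \<le> (j - i) + card (w j - C)" using Suc.IH ij Suc.prems by simp
    have f: "finite (w j)" "finite (w (Suc j))"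
      using walk_vertex[OF assms(1)] Suc.prems unfolding exch_vertex_def by auto
    have "card (w j - C) \<le> card (w (Suc j) - C) + 1"
      using edge_card(1)[OF walk_edge[OF assms(1)] f] Suc.prems by simp
    then show ?thesis using IH ij by simp
  qed
qed

lemma main:
  assumes sp: "special_path S R n k Pc Pr v r"
    and mn: "\<forall>v' r'. special_path S R n k Pc Pr v' r' \<longrightarrow> r \<le> r'"
    and r3: "r \<ge> 3"
  shows "(\<Union>j\<in>{0..r}. v j) = v 0 \<union> v r \<and>
         r - 1 = card (v 0 - (v 0 \<inter> v r)) - 1 \<and>
         r - 1 = card (v r - (v 0 \<inter> v r)) - 1"
proof -
  obtain a b c where abc: "special_path_idx S R n k Pc Pr v r a b c" using sp unfolding special_path_def by blast
  have ep: "exch_path S R n v r" and abck: "a \<in> {1..k}" "b \<in> {1..k}" "c \<in> {1..k}"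
    and dist: "a \<noteq> b" "a \<noteq> c" "b \<noteq> c"
    and isos: "poset_iso (v 0) R (Pc a) (Pr a)" "\<forall>j\<in>{1..r-1}. poset_iso (v j) R (Pc b) (Pr b)"
       "poset_iso (v r) R (Pc c) (Pr c)"
    using abc unfolding special_path_idx_def by auto
  have wv: "walk v r" using ep unfolding exch_path_def walk_def by blast
  have inj: "inj_on v {0..r}" using ep unfolding exch_path_def by blast
  have vx: "\<And>j. j \<le> r \<Longrightarrow> exch_vertex S R n (v j)" using walk_vertex[OF wv] by blast
  have ca: "cls (v 0) = a" using cls_eq[OF vx[of 0] abck(1) isos(1)] by simp
  have cc: "cls (v r) = c" using cls_eq[OF vx[of r] abck(3) isos(3)] by simp
  have cb: "cls (v j) = b" if "1 \<le> j" "j \<le> r - 1" for j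
    using cls_eq[OF vx[of j] abck(2)] isos(2) that by auto
  have nosh: "\<And>v' r'. special_path S R n k Pc Pr v' r' \<Longrightarrow> r \<le> r'" using mn by blast
  define A where "A = v 0"
  define C where "C = v r"
  define d where "d = card (A - C)"
  have fin: "finite A" "finite C" "card A = n" "card C = n"
    using vx[of 0] vx[of r] unfolding A_def C_def exch_vertex_def by auto
  have dle: "d \<le> r" using pot[OF wv, of 0 r C] unfolding d_def A_def C_def by simp
  have dge: "\<not> d < r"
  proof
    assume dr: "d < r"
    show False
    proof (cases "d = 0")
      case True
      then have "A - C = {}" using fin unfolding d_def by simp
      then have "A \<subseteq> C" by blast
      then have "A = C" using fin card_subset_eq by metis
      then have "v 0 = v r" unfolding A_def C_def .
      moreover have "(0::nat) \<in> {0..r}" "r \<in> {0..r}" by auto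
      ultimately have "(0::nat) = r" using inj unfolding inj_on_def by blast
      then show False using r3 by simp
    next
      case False
      obtain g where g: "walk g d" "g 0 = A" "g d = C"
        using geodesic[OF vx[of 0] vx[of r]] unfolding A_def C_def d_def by blast
      have vX: "exch_vertex S R n (g 1)" using walk_vertex[OF g(1), of 1] False by simp
      have cga: "cls (g 0) = a" using g ca A_def by simp
      have cgc: "cls (g d) = c" using g cc C_def by simp
      consider "cls (g 1) = c" | "cls (g 1) = a" | "cls (g 1) \<noteq> a" "cls (g 1) \<noteq> c" by blast
      then show False
      proof cases
        case 1
        define u where "u = (\<lambda>t::nat. if t = 0 then v 1 else if t = 1 then A else g 1)"
        have wu: "walk u 2" unfolding walk_def
        proof (intro conjI allI impI)
          fix j :: nat assume "j \<le> 2"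
          then show "exch_vertex S R n (u j)" unfolding u_def A_def using vx[of 1] vx[of 0] vX r3 by auto
        next
          fix j :: nat assume j: "j < 2"
          have e1: "exch_edge (v 1) (v 0)" using edge_sym walk_edge[OF wv, of 0] r3 by simp
          have e2: "exch_edge A (g 1)" using walk_edge[OF g(1), of 0] g(2) False by simp
          show "exch_edge (u j) (u (Suc j))" using j e1 e2 unfolding u_def A_def
            by (cases j) (auto simp: numeral_2_eq_2)
        qed
        have "\<exists>v' r'. special_path S R n k Pc Pr v' r' \<and> r' \<le> 2"
        proof (rule seg_special[OF wu, of a])
          show "2 \<le> (2::nat)" by simp
          have "cls (u 0) = b" unfolding u_def using cb[of 1] r3 by simp
          moreover have "cls (u 2) = c" unfolding u_def using 1 by simp
          ultimately show "cls (u 0) \<noteq> cls (u 2)" "a \<noteq> cls (u 0)" "a \<noteq> cls (u 2)" using dist by auto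
          show "\<forall>t. 1 \<le> t \<and> t < 2 \<longrightarrow> cls (u t) = a" unfolding u_def A_def using ca
            by (auto simp: numeral_2_eq_2)
        qed
        then obtain v' r' where "special_path S R n k Pc Pr v' r'" "r' \<le> 2" by blast
        then show False using nosh[of v' r'] r3 by simp
      next
        case 2
        have d2: "d \<noteq> 1" using 2 cgc dist by auto
        define u where "u = (\<lambda>t. if t = 0 then v (r - 1) else g (d + 1 - t))"
        have wu: "walk u d" unfolding walk_def
        proof (intro conjI allI impI)
          fix j assume "j \<le> d"
          then show "exch_vertex S R n (u j)" unfolding u_def using vx[of "r - 1"] walk_vertex[OF g(1)] by auto
        next
          fix j assume j: "j < d"
          show "exch_edge (u j) (u (Suc j))"
          proof (cases j)
            case 0
            have "exch_edge (v (r - 1)) (v r)" using walk_edge[OF wv, of "r - 1"] r3 by simp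
            then show ?thesis unfolding u_def using 0 g(3) C_def by simp
          next
            case (Suc j')
            have "exch_edge (g (d - j)) (g (Suc (d - j)))" using walk_edge[OF g(1), of "d - j"] j Suc by simp
            then have "exch_edge (g (Suc (d - j))) (g (d - j))" using edge_sym by blast
            moreover have "Suc (d - j) = d + 1 - j" "d - j = d + 1 - Suc j" using j by auto
            ultimately show ?thesis unfolding u_def using Suc by simp
          qed
        qed
        have "\<exists>v' r'. special_path S R n k Pc Pr v' r' \<and> r' \<le> d"
        proof (rule third[OF wu, of 1])
          have "cls (u 0) = b" unfolding u_def using cb[of "r - 1"] r3 by simp
          moreover have "cls (u d) = a" unfolding u_def using 2 False d2 by simp
          moreover have "cls (u 1) = c" unfolding u_def using cgc by simp
          ultimately show "cls (u 0) \<noteq> cls (u d)" "cls (u 1) \<noteq> cls (u 0)" "cls (u 1) \<noteq> cls (u d)"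
            using dist by auto
          show "1 \<le> d" using False by simp
        qed
        then obtain v' r' where "special_path S R n k Pc Pr v' r'" "r' \<le> d" by blast
        then show False using nosh[of v' r'] dr by simp
      next
        case 3
        have "\<exists>v' r'. special_path S R n k Pc Pr v' r' \<and> r' \<le> d"
          using third[OF g(1), of 1] 3 cga cgc dist False by simp
        then obtain v' r' where "special_path S R n k Pc Pr v' r'" "r' \<le> d" by blast
        then show False using nosh[of v' r'] dr by simp
      qed
    qed
  qed
  have dr: "d = r" using dle dge by simp
  have p2: "card (v 0 - (v 0 \<inter> v r)) = r"
    using dr unfolding d_def A_def C_def by (simp add: Diff_Int_distrib Diff_Int)
  have p3: "card (v r - (v 0 \<inter> v r)) = r"
    using p2 card_diff_sym[of A C] fin unfolding A_def C_def by (simp add: Diff_Int)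
  have sub: "v j \<subseteq> A \<union> C" if "j \<le> r" for j
    using that
  proof (induction j)
    case 0 then show ?case unfolding A_def by blast
  next
    case (Suc j)
    have "v (Suc j) - v j \<subseteq> C"
    proof
      fix y assume y: "y \<in> v (Suc j) - v j"
      show "y \<in> C"
      proof (rule ccontr)
        assume yC: "y \<notin> C"
        have f: "finite (v j)" "finite (v (Suc j))"
          using vx Suc.prems unfolding exch_vertex_def by auto
        have e: "exch_edge (v j) (v (Suc j))" using walk_edge[OF wv, of j] Suc.prems by simp
        have s1: "card (v j - C) \<le> card (v (Suc j) - C)" using edge_card(2)[OF e f] y yC by blast
        have s2: "card (v 0 - C) \<le> j + card (v j - C)" using pot[OF wv, of 0 j C] Suc.prems by simp
        have s3: "card (v (Suc j) - C) \<le> (r - Suc j) + card (v r - C)" using pot[OF wv, of "Suc j" r C] Suc.prems by simp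
        have "card (v 0 - C) = r" using dr unfolding d_def A_def by simp
        then show False using s1 s2 s3 Suc.prems unfolding C_def by simp
      qed
    qed
    moreover have "v j \<subseteq> A \<union> C" using Suc.IH Suc.prems by simp
    ultimately show ?case by blast
  qed
  have "(\<Union>j\<in>{0..r}. v j) = v 0 \<union> v r"
  proof
    show "(\<Union>j\<in>{0..r}. v j) \<subseteq> v 0 \<union> v r" using sub unfolding A_def C_def by (simp add: UN_subset_iff)
    have "v 0 \<subseteq> (\<Union>j\<in>{0..r}. v j)" by (rule UN_upper) simp
    moreover have "v r \<subseteq> (\<Union>j\<in>{0..r}. v j)" by (rule UN_upper) simp
    ultimately show "v 0 \<union> v r \<subseteq> (\<Union>j\<in>{0..r}. v j)" by blast
  qed
  then show ?thesis using p2 p3 by simp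
qed

end


theorem mainTheorem13:
  fixes S :: "'a set" and R :: "'a rel" and n k :: nat
    and Pc :: "nat \<Rightarrow> 'b set" and Pr :: "nat \<Rightarrow> 'b rel"
    and v :: "nat \<Rightarrow> 'a set" and r :: nat
  assumes "k \<ge> 3"
    and "Gamma n k Pc Pr"
    and "witness S R n k Pc Pr"
    and "special_path S R n k Pc Pr v r"
    and "\<forall>v' r'. special_path S R n k Pc Pr v' r' \<longrightarrow> r \<le> r'"
    and "r \<ge> 3"
  shows "(\<Union>j\<in>{0..r}. v j) = v 0 \<union> v r \<and>
         r - 1 = card (v 0 - (v 0 \<inter> v r)) - 1 \<and>
         r - 1 = card (v r - (v 0 \<inter> v r)) - 1"
proof -
  interpret ctx S R n k Pc Pr using assms(2,3) by unfold_locales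
  show ?thesis using main assms(4,5,6) by blast
qed

end
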